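(* Let $P$ be a flasque pre-meadow with $\mathbf{a}$. For $x\in P$ let $J_x=\{0\cdot z\in 0\cdot P\mid x+0\cdot z\in P_{0\cdot z}^{\times}\}$. Then $J_x$ has a greatest element (with respect to the order on $0\cdot P$) for all $x\in P$ if and only if $J_x$ has a greatest element for all $x\in P_0$.
   Context: A pre-meadow is a structure $(P,+,-,\cdot,0,1)$ satisfying: $(x+y)+z=x+(y+z)$, $x+y=y+x$, $x+0=x$, $x+(-x)=0\cdot x$, $(xy)z=x(yz)$, $xy=yx$, $1\cdot x=x$, $x(y+z)=xy+xz$, $-(-x)=x$, $0\cdot(x+y)=0\cdot x\cdot y$. For $z\in 0\cdot P$ put $P_z:=\{x\in P\mid 0\cdot x=z\}$. $P$ is a pre-meadow with $\mathbf{a}$ if there is a unique $z\in 0\cdot P$ with $|P_z|=1$, denoted $\mathbf{a}$, and $x+\mathbf{a}=\mathbf{a}$ for all $x\in P$. Each $P_{0\cdot z}$ is a commutative ring with the induced operations (zero $0\cdot z$, unit $1+0\cdot z$), and $P_{0\cdot z}^{\times}$ denotes its group of units. The set $0\cdot P$ is ordered by $0\cdot z\le 0\cdot w$ iff $0\cdot z\cdot w=0\cdot z$ (so $0$ is greatest and $\mathbf{a}$ least). For $0\cdot z\le 0\cdot w$ the transition map $f_{0\cdot w,0\cdot z}:P_{0\cdot w}\to P_{0\cdot z}$ is $x\mapsto x+0\cdot z$. $P$ is flasque if all transition maps are surjective. *)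

theory Defs
  imports Main
begin

definition pre_meadow ::
  "('a \<Rightarrow> 'a \<Rightarrow> 'a) \<Rightarrow> ('a \<Rightarrow> 'a) \<Rightarrow> ('a \<Rightarrow> 'a \<Rightarrow> 'a) \<Rightarrow> 'a \<Rightarrow> 'a \<Rightarrow> bool" where
  "pre_meadow add neg mul zero one \<longleftrightarrow>
     (\<forall>x y z. add (add x y) z = add x (add y z)) \<and>
     (\<forall>x y. add x y = add y x) \<and>
     (\<forall>x. add x zero = x) \<and>
     (\<forall>x. add x (neg x) = mul zero x) \<and>
     (\<forall>x y z. mul (mul x y) z = mul x (mul y z)) \<and>
     (\<forall>x y. mul x y = mul y x) \<and>
     (\<forall>x. mul one x = x) \<and>
     (\<forall>x y z. mul x (add y z) = add (mul x y) (mul x z)) \<and>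
     (\<forall>x. neg (neg x) = x) \<and>
     (\<forall>x y. mul zero (add x y) = mul (mul zero x) y)"

definition zeroP :: "('a \<Rightarrow> 'a \<Rightarrow> 'a) \<Rightarrow> 'a \<Rightarrow> 'a set" where
  "zeroP mul zero = range (mul zero)"

definition Pz :: "('a \<Rightarrow> 'a \<Rightarrow> 'a) \<Rightarrow> 'a \<Rightarrow> 'a \<Rightarrow> 'a set" where
  "Pz mul zero z = {x. mul zero x = z}"

definition has_a :: "('a \<Rightarrow> 'a \<Rightarrow> 'a) \<Rightarrow> ('a \<Rightarrow> 'a \<Rightarrow> 'a) \<Rightarrow> 'a \<Rightarrow> bool" where
  "has_a add mul zero \<longleftrightarrow>
     (\<exists>z. z \<in> zeroP mul zero \<and> card (Pz mul zero z) = 1 \<and>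
          (\<forall>z'. z' \<in> zeroP mul zero \<and> card (Pz mul zero z') = 1 \<longrightarrow> z' = z) \<and>
          (\<forall>x. add x z = z))"

text \<open>Order on \<open>0\<cdot>P\<close>: \<open>0\<cdot>z \<le> 0\<cdot>w\<close> iff \<open>0\<cdot>z\<cdot>w = 0\<cdot>z\<close>; for elements
  z, w of \<open>0\<cdot>P\<close> (so \<open>z = 0\<cdot>z\<close>) this reads \<open>z\<cdot>w = z\<close>.\<close>
definition zle :: "('a \<Rightarrow> 'a \<Rightarrow> 'a) \<Rightarrow> 'a \<Rightarrow> 'a \<Rightarrow> bool" where
  "zle mul z w \<longleftrightarrow> mul z w = z"

text \<open>Units of the ring \<open>P_z\<close> (zero \<open>z\<close>, unit \<open>1 + z\<close>), for \<open>z \<in> 0\<cdot>P\<close>.\<close>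
definition units_Pz ::
  "('a \<Rightarrow> 'a \<Rightarrow> 'a) \<Rightarrow> ('a \<Rightarrow> 'a \<Rightarrow> 'a) \<Rightarrow> 'a \<Rightarrow> 'a \<Rightarrow> 'a \<Rightarrow> 'a set" where
  "units_Pz add mul zero one z =
     {x \<in> Pz mul zero z. \<exists>y \<in> Pz mul zero z. mul x y = add one z}"

definition flasque :: "('a \<Rightarrow> 'a \<Rightarrow> 'a) \<Rightarrow> ('a \<Rightarrow> 'a \<Rightarrow> 'a) \<Rightarrow> 'a \<Rightarrow> bool" where
  "flasque add mul zero \<longleftrightarrow>
     (\<forall>z \<in> zeroP mul zero. \<forall>w \<in> zeroP mul zero. zle mul z w \<longrightarrow>
        (\<lambda>x. add x z) ` Pz mul zero w = Pz mul zero z)"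

definition Jset ::
  "('a \<Rightarrow> 'a \<Rightarrow> 'a) \<Rightarrow> ('a \<Rightarrow> 'a \<Rightarrow> 'a) \<Rightarrow> 'a \<Rightarrow> 'a \<Rightarrow> 'a \<Rightarrow> 'a set" where
  "Jset add mul zero one x =
     {z \<in> zeroP mul zero. add x z \<in> units_Pz add mul zero one z}"

definition has_greatest :: "('a \<Rightarrow> 'a \<Rightarrow> 'a) \<Rightarrow> 'a set \<Rightarrow> bool" where
  "has_greatest mul J \<longleftrightarrow> (\<exists>g \<in> J. \<forall>j \<in> J. zle mul j g)"

end

theory Submission
  imports Defs
begin

locale pm =
  fixes add mul :: "'a \<Rightarrow> 'a \<Rightarrow> 'a" and neg :: "'a \<Rightarrow> 'a" and zero one :: 'a
  assumes A: "pre_meadow add neg mul zero one"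
begin

sublocale add: abel_semigroup add
  using A unfolding pre_meadow_def by unfold_locales auto
sublocale mul: abel_semigroup mul
  using A unfolding pre_meadow_def by unfold_locales auto

lemma add0: "add x zero = x" using A unfolding pre_meadow_def by auto
lemma mul1: "mul one x = x" using A unfolding pre_meadow_def by auto
lemma distr: "mul x (add y z) = add (mul x y) (mul x z)" using A unfolding pre_meadow_def by auto
lemma zadd: "mul zero (add x y) = mul (mul zero x) y" using A unfolding pre_meadow_def by auto

lemma negax: "add x (neg x) = mul zero x" "neg (neg x) = x" using A unfolding pre_meadow_def by auto

lemma zz: "mul zero zero = zero"
proof -
  have 1: "mul zero one = zero" using mul1[of zero] mul.commute[of one zero] by simp
  have "mul zero (add one zero) = mul (mul zero one) zero" by (rule zadd)
  then show ?thesis unfolding add0 1 by simp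
qed

lemma z2: "mul zero (mul zero y) = mul zero y"
  by (simp add: mul.assoc[symmetric] zz)

lemma idem0: "mul (mul zero x) x = mul zero x"
proof -
  have a: "mul zero (neg x) = mul zero x"
    using negax(1)[of "neg x"] negax(1)[of x] add.commute[of x "neg x"] unfolding negax(2) by simp
  have "mul zero (add (neg x) (neg (neg x))) = mul (mul zero (neg x)) (neg (neg x))" by (rule zadd)
  have b: "add (neg x) x = mul zero (neg x)" using negax(1)[of "neg x"] unfolding negax(2) .
  have "mul zero (add (neg x) x) = mul (mul zero (neg x)) x" by (rule zadd)
  hence "mul zero (mul zero (neg x)) = mul (mul zero (neg x)) x" unfolding b .
  then show ?thesis unfolding z2 a by simp
qed

lemma zP: "z \<in> zeroP mul zero \<Longrightarrow> mul zero z = z"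
  unfolding zeroP_def using z2 by auto

lemma zP_mul: "z \<in> zeroP mul zero \<Longrightarrow> mul z w \<in> zeroP mul zero"
  unfolding zeroP_def using mul.assoc by auto

lemma zidem: "z \<in> zeroP mul zero \<Longrightarrow> mul z z = z"
proof -
  assume "z \<in> zeroP mul zero"
  then obtain a where "z = mul zero a" unfolding zeroP_def by auto
  then show ?thesis using idem0[of a] z2[of a]
    by (simp add: mul.assoc mul.left_commute[of a])
qed

lemma zadd2: "z \<in> zeroP mul zero \<Longrightarrow> w \<in> zeroP mul zero \<Longrightarrow> add z w = mul z w"
proof -
  assume "z \<in> zeroP mul zero" "w \<in> zeroP mul zero"
  then obtain a b where ab: "z = mul zero a" "w = mul zero b" unfolding zeroP_def by auto
  have "add (mul zero a) (mul zero b) = mul zero (add a b)" by (rule distr[symmetric])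
  also have "\<dots> = mul (mul zero a) b" by (rule zadd)
  also have "\<dots> = mul (mul (mul zero a) zero) b"
    unfolding mul.commute[of "mul zero a" zero] z2[of a] ..
  also have "\<dots> = mul (mul zero a) (mul zero b)" by (rule mul.assoc)
  finally show ?thesis unfolding ab .
qed

lemma mulz: "z \<in> zeroP mul zero \<Longrightarrow> zle mul z (mul zero a) \<Longrightarrow> mul a z = z"
proof -
  assume h: "z \<in> zeroP mul zero" "zle mul z (mul zero a)"
  have "mul a z = mul a (mul zero z)" using zP[OF h(1)] by simp
  also have "\<dots> = mul z (mul zero a)" by (simp add: mul.assoc mul.commute mul.left_commute)
  also have "\<dots> = z" using h(2) unfolding zle_def .
  finally show ?thesis .
qed

lemma down:
  assumes "z \<in> Jset add mul zero one y" "z' \<in> zeroP mul zero" "zle mul z' z"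
  shows "z' \<in> Jset add mul zero one y"
proof -
  have z: "z \<in> zeroP mul zero" and yz: "mul zero (add y z) = z"
    and u: "\<exists>u. mul zero u = z \<and> mul (add y z) u = add one z"
    using assms(1) unfolding Jset_def units_Pz_def Pz_def by auto
  then obtain u where u0: "mul zero u = z" and uu: "mul (add y z) u = add one z" by blast
  have zz': "mul z' z = z'" using assms(3) unfolding zle_def .
  have Z'Z: "add z z' = z'" using zadd2[OF z assms(2)] zz' mul.commute[of z z'] by simp
  have m3: "mul z' z' = z'" using zidem[OF assms(2)] .
  have Z'Z': "add z' z' = z'" using zadd2[OF assms(2) assms(2)] m3 by simp
  have yz': "add y z' = add (add y z) z'" using Z'Z add.assoc[of y z z'] by simp
  have e1: "mul zero (add y z') = z'"
  proof -
    have "mul zero (add y z') = mul (mul zero y) z'" by (rule zadd)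
    also have "\<dots> = mul (mul zero y) (mul z' z)" using zz' by simp
    also have "\<dots> = mul z' (mul (mul zero y) z)" by (simp add: mul.assoc mul.commute mul.left_commute)
    also have "mul (mul zero y) z = z" using yz zadd[of y z] by simp
    finally show ?thesis using zz' by simp
  qed
  have e2: "mul zero (add u z') = z'" using zadd[of u z'] u0 zz' mul.commute[of z' z] by simp
  have le1: "zle mul z' (mul zero (add y z))" using yz zz' unfolding zle_def by simp
  have le2: "zle mul z' (mul zero u)" using u0 zz' unfolding zle_def by simp
  have m1: "mul (add y z) z' = z'" by (rule mulz[OF assms(2) le1])
  have m2: "mul u z' = z'" by (rule mulz[OF assms(2) le2])
  have m2': "mul z' u = z'" using m2 mul.commute[of u z'] by simp
  have dr: "mul (add p q) r = add (mul p r) (mul q r)" for p q r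
    using distr[of r p q] mul.commute[of r] by simp
  have "mul (add y z') (add u z') = add (add (mul (add y z) u) (mul z' u)) (add (mul (add y z) z') (mul z' z'))"
    unfolding yz' by (simp only: distr dr)
  also have "\<dots> = add (add (add one z) z') (add z' z')" by (simp only: uu m2' m1 m3)
  also have "\<dots> = add one z'" by (simp only: add.assoc Z'Z Z'Z')
  finally have "mul (add y z') (add u z') = add one z'" .
  then show ?thesis unfolding Jset_def units_Pz_def Pz_def using assms(2) e1 e2 by auto
qed

end

theorem theorem3p12:
  fixes add mul :: "'a \<Rightarrow> 'a \<Rightarrow> 'a" and neg :: "'a \<Rightarrow> 'a" and zero one :: 'a
  assumes "pre_meadow add neg mul zero one"
    and "has_a add mul zero"
    and "flasque add mul zero"
  shows "(\<forall>x. has_greatest mul (Jset add mul zero one x)) \<longleftrightarrow>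
         (\<forall>x \<in> Pz mul zero zero. has_greatest mul (Jset add mul zero one x))"
proof
  assume "\<forall>x. has_greatest mul (Jset add mul zero one x)"
  then show "\<forall>x \<in> Pz mul zero zero. has_greatest mul (Jset add mul zero one x)" by blast
next
  interpret pm add mul neg zero one by (rule pm.intro) (rule assms(1))
  assume R: "\<forall>x \<in> Pz mul zero zero. has_greatest mul (Jset add mul zero one x)"
  show "\<forall>x. has_greatest mul (Jset add mul zero one x)"
  proof
    fix x
    define e where "e = mul zero x"
    have eP: "e \<in> zeroP mul zero" unfolding e_def zeroP_def by auto
    have zP0: "zero \<in> zeroP mul zero" unfolding zeroP_def using zz by (metis rangeI)
    have "zle mul e zero" unfolding zle_def e_def by (simp add: mul.commute[of "mul zero x" zero] z2)
    with assms(3) eP zP0 have "(\<lambda>x. add x e) ` Pz mul zero zero = Pz mul zero e"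
      unfolding flasque_def by blast
    moreover have "x \<in> Pz mul zero e" unfolding Pz_def e_def by simp
    ultimately obtain x' where x'P: "x' \<in> Pz mul zero zero" and xx: "x = add x' e" by force
    obtain g where gJ: "g \<in> Jset add mul zero one x'"
      and gmax: "\<forall>j \<in> Jset add mul zero one x'. zle mul j g"
      using R x'P unfolding has_greatest_def by blast
    have gP: "g \<in> zeroP mul zero" using gJ unfolding Jset_def by auto
    have ch: "z \<in> Jset add mul zero one x \<longleftrightarrow> z \<in> Jset add mul zero one x' \<and> zle mul z e"
      if zP': "z \<in> zeroP mul zero" for z
    proof -
      have c1: "z \<in> Jset add mul zero one x \<Longrightarrow> zle mul z e"
        unfolding Jset_def units_Pz_def Pz_def zle_def e_def using zadd mul.commute by force
      have c2: "zle mul z e \<Longrightarrow> add x z = add x' z"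
      proof -
        assume "zle mul z e"
        then have "mul z e = z" by (simp add: zle_def)
        then have "add e z = z" using zadd2[OF eP zP'] mul.commute[of e z] by simp
        then show ?thesis by (simp add: xx add.assoc)
      qed
      show ?thesis
      proof
        assume h: "z \<in> Jset add mul zero one x"
        then have "zle mul z e" by (rule c1)
        with h c2 show "z \<in> Jset add mul zero one x' \<and> zle mul z e" unfolding Jset_def by auto
      next
        assume "z \<in> Jset add mul zero one x' \<and> zle mul z e"
        with c2 show "z \<in> Jset add mul zero one x" unfolding Jset_def by auto
      qed
    qed
    define g' where "g' = mul g e"
    have g'P: "g' \<in> zeroP mul zero" unfolding g'_def by (rule zP_mul[OF gP])
    have "zle mul g' g" proof -
      have "mul (mul g e) g = mul (mul g g) e" by (simp add: mul.assoc mul.commute mul.left_commute)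
      then show ?thesis using zidem[OF gP] unfolding g'_def zle_def by simp
    qed
    then have "g' \<in> Jset add mul zero one x'" using down gJ g'P by blast
    moreover have "zle mul g' e" unfolding zle_def g'_def by (simp add: mul.assoc zidem[OF eP])
    ultimately have g'J: "g' \<in> Jset add mul zero one x" using ch g'P by blast
    have "\<forall>j \<in> Jset add mul zero one x. zle mul j g'"
    proof
      fix j assume jJ: "j \<in> Jset add mul zero one x"
      then have jP: "j \<in> zeroP mul zero" unfolding Jset_def by auto
      with ch jJ have "j \<in> Jset add mul zero one x'" "zle mul j e" by auto
      with gmax have "zle mul j g" "zle mul j e" by auto
      then show "zle mul j g'" unfolding zle_def g'_def by (simp add: mul.assoc[symmetric])
    qed
    with g'J show "has_greatest mul (Jset add mul zero one x)" unfolding has_greatest_def by blast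
  qed
qed

end
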